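(* Let $X$ be a topological space (no separation axioms assumed) that is both locally $\mathfrak{c}$ and $\mathfrak{c}$-fair, and suppose $t(x,X)<\operatorname{cf}(\mathfrak{c})$ for every $x\in X$. If $|X|>\mathfrak{c}$, then there exists a clopen subset $U$ of $X$ with $|U|=L(U)=\mathfrak{c}$.
   Context: A space $X$ is locally $\mathfrak{c}$ if every point has a neighbourhood of cardinality $\le\mathfrak{c}$. $X$ is $\mathfrak{c}$-fair if the closure of every subset of $X$ of cardinality $\mathfrak{c}$ also has cardinality $\mathfrak{c}$. $t(x,X)$ denotes the tightness of $X$ at $x$, and $L(U)$ the Lindelöf number of $U$ (the least infinite cardinal $\lambda$ such that every open cover of $U$ has a subcover of size $\le\lambda$). *)

theory Defs
  imports "HOL-Analysis.Analysis"
begin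

text \<open>Cardinal comparison via the HOL cardinal library (card_of, ordLeq, ordLess, ordIso).
  The continuum c is represented by the cardinal of UNIV :: real set.\<close>

definition continuum :: "real rel" where
  "continuum = card_of (UNIV :: real set)"

text \<open>|K| < cf(c): the cardinality of K is strictly below every cofinal subset
  of the (initial) well-order c, i.e. below the cofinality of c.\<close>
definition below_cf_continuum :: "'b set \<Rightarrow> bool" where
  "below_cf_continuum K \<longleftrightarrow>
     (\<forall>A. cofinal A continuum \<longrightarrow> (card_of K, card_of A) \<in> ordLess)"

definition tightness_le :: "'a topology \<Rightarrow> 'a \<Rightarrow> 'b set \<Rightarrow> bool" where
  "tightness_le X x K \<longleftrightarrow>
     (\<forall>Y. Y \<subseteq> topspace X \<and> x \<in> X closure_of Y \<longrightarrow>
        (\<exists>B\<subseteq>Y. (card_of B, card_of K) \<in> ordLeq \<and> x \<in> X closure_of B))"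

text \<open>Since cf(c) is uncountable, the convention that tightness is an
  infinite cardinal makes no difference; and since cf(c) \<le> c the witness cardinal
  can be taken as the cardinal of a set of reals.\<close>
definition tightness_below_cf_continuum :: "'a topology \<Rightarrow> 'a \<Rightarrow> bool" where
  "tightness_below_cf_continuum X x \<longleftrightarrow>
     (\<exists>K :: real set. below_cf_continuum K \<and> tightness_le X x K)"

definition locally_continuum :: "'a topology \<Rightarrow> bool" where
  "locally_continuum X \<longleftrightarrow>
     (\<forall>x\<in>topspace X. \<exists>N V. openin X V \<and> x \<in> V \<and> V \<subseteq> N \<and> N \<subseteq> topspace X
        \<and> (card_of N, continuum) \<in> ordLeq)"

definition continuum_fair :: "'a topology \<Rightarrow> bool" where
  "continuum_fair X \<longleftrightarrow>
     (\<forall>A. A \<subseteq> topspace X \<and> (card_of A, continuum) \<in> ordIso \<longrightarrow>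
        (card_of (X closure_of A), continuum) \<in> ordIso)"

text \<open>L(U) \<le> |K| (for infinite K): every cover of U by open sets of X
  (equivalently, open cover of the subspace U) has a subcover of size at most |K|.\<close>
definition lindelof_le :: "'a topology \<Rightarrow> 'a set \<Rightarrow> 'b set \<Rightarrow> bool" where
  "lindelof_le X U K \<longleftrightarrow>
     (\<forall>\<U>. (\<forall>V\<in>\<U>. openin X V) \<and> U \<subseteq> \<Union>\<U> \<longrightarrow>
        (\<exists>\<V>\<subseteq>\<U>. U \<subseteq> \<Union>\<V> \<and> (card_of \<V>, card_of K) \<in> ordLeq))"

definition lindelof_eq_continuum :: "'a topology \<Rightarrow> 'a set \<Rightarrow> bool" where
  "lindelof_eq_continuum X U \<longleftrightarrow>
     lindelof_le X U (UNIV :: real set) \<and>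
     (\<forall>K :: real set. infinite K \<and> (card_of K, continuum) \<in> ordLess \<longrightarrow> \<not> lindelof_le X U K)"

end

theory Submission
  imports Defs
begin

unbundle cardinal_syntax

locale T42 =
  fixes X :: "'a topology"
  assumes loc: "locally_continuum X"
    and fair: "continuum_fair X"
    and tight: "\<forall>x\<in>topspace X. tightness_below_cf_continuum X x"
    and big: "(continuum, card_of (topspace X)) \<in> ordLess"
begin

abbreviation rr :: "real rel" where "rr \<equiv> continuum"

lemma rr_co: "Card_order rr" unfolding continuum_def by (rule card_of_Card_order)
lemma rr_wo: "wo_rel rr" unfolding continuum_def wo_rel_def by (rule card_of_Well_order)
lemma rr_F: "Field rr = UNIV" unfolding continuum_def by (rule Field_card_of)
lemma rr_inf: "\<not> finite (Field rr)" unfolding rr_F by (rule infinite_UNIV_char_0)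

lemma underS_iff: "b \<in> underS rr a \<longleftrightarrow> b \<noteq> a \<and> (b,a) \<in> rr"
  by (simp add: underS_def)

lemma tot: "(a,b) \<in> rr \<or> (b,a) \<in> rr"
  using wo_rel.TOTALS[OF rr_wo] rr_F by auto

lemma trn: "(a,b) \<in> rr \<Longrightarrow> (b,c) \<in> rr \<Longrightarrow> (a,c) \<in> rr"
  using wo_rel.TRANS[OF rr_wo] unfolding trans_def by blast

lemma nomax_rr: "\<exists>j. a \<noteq> j \<and> (a,j) \<in> rr"
  using infinite_Card_order_limit[OF rr_co rr_inf, of a] rr_F by auto

definition Nb where "Nb x = (SOME N. N \<subseteq> topspace X \<and> |N| \<le>o rr \<and> x \<in> X interior_of N)"

lemma Nb: assumes "x \<in> topspace X"
  shows "Nb x \<subseteq> topspace X" "|Nb x| \<le>o rr" "x \<in> X interior_of Nb x"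
proof -
  obtain N V where NV: "openin X V" "x \<in> V" "V \<subseteq> N" "N \<subseteq> topspace X" "|N| \<le>o rr"
    using loc[unfolded locally_continuum_def, rule_format, OF assms] by (elim exE conjE)
  have "x \<in> X interior_of N" unfolding interior_of_def using NV(1-3) by (intro CollectI exI[of _ V]) simp
  hence "\<exists>N. N \<subseteq> topspace X \<and> |N| \<le>o rr \<and> x \<in> X interior_of N"
    using NV(4,5) by (intro exI[of _ N]) simp
  then have "Nb x \<subseteq> topspace X \<and> |Nb x| \<le>o rr \<and> x \<in> X interior_of Nb x"
    unfolding Nb_def by (rule someI_ex)
  thus "Nb x \<subseteq> topspace X" "|Nb x| \<le>o rr" "x \<in> X interior_of Nb x" by auto
qed

lemma pad: obtains P where "P \<subseteq> topspace X" "|P| =o rr"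
proof -
  have "rr \<le>o |topspace X|" using big ordLess_imp_ordLeq by blast
  then obtain f where f: "inj_on f (UNIV::real set)" "f ` UNIV \<subseteq> topspace X"
    unfolding continuum_def card_of_ordLeq[symmetric] by blast
  hence "bij_betw f UNIV (f ` UNIV)" by (simp add: bij_betw_def)
  hence "|UNIV::real set| =o |f ` UNIV|" using card_of_ordIso by blast
  hence "|f ` UNIV| =o rr" unfolding continuum_def using ordIso_symmetric by blast
  thus ?thesis using that f(2) by blast
qed

lemma singl_le: "|{b}| \<le>o rr"
  unfolding continuum_def by (rule card_of_singl_ordLeq) simp

definition T where "T Y = X closure_of (Y \<union> (\<Union>y\<in>Y. Nb y))"

lemma T_card: assumes Y: "Y \<subseteq> topspace X" "|Y| \<le>o rr" shows "|T Y| \<le>o rr"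
proof -
  let ?Z = "Y \<union> (\<Union>y\<in>Y. Nb y)"
  have "|\<Union>y\<in>Y. Nb y| \<le>o rr"
    using card_of_UNION_ordLeq_infinite_Field[OF rr_inf rr_co Y(2)] Nb(2) Y(1) by blast
  hence Zc: "|?Z| \<le>o rr" using card_of_Un_ordLeq_infinite_Field[OF rr_inf Y(2) _ rr_co] by blast
  have Zs: "?Z \<subseteq> topspace X" using Y(1) Nb(1) by blast
  obtain P where P: "P \<subseteq> topspace X" "|P| =o rr" by (rule pad)
  have "|?Z \<union> P| \<le>o rr"
    using card_of_Un_ordLeq_infinite_Field[OF rr_inf Zc _ rr_co] P(2) ordIso_imp_ordLeq by blast
  moreover have "rr \<le>o |?Z \<union> P|"
    using P(2) card_of_mono1[of P "?Z \<union> P"] ordIso_ordLeq_trans ordIso_symmetric by blast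
  ultimately have "|?Z \<union> P| =o rr" using ordIso_iff_ordLeq by blast
  moreover have "?Z \<union> P \<subseteq> topspace X" using Zs P(1) by blast
  ultimately have "|X closure_of (?Z \<union> P)| =o rr" using fair unfolding continuum_fair_def by blast
  moreover have "|T Y| \<le>o |X closure_of (?Z \<union> P)|"
    unfolding T_def by (rule card_of_mono1, rule closure_of_mono) blast
  ultimately show ?thesis using ordLeq_ordIso_trans by blast
qed

definition pt where "pt S = (SOME p. p \<in> topspace X \<and> p \<notin> S)"
definition F where "F f a = T ((\<Union>b\<in>underS rr a. f b) \<union> {pt (\<Union>b\<in>underS rr a. f b)})"
definition W where "W = wo_rel.worec rr F"
definition Pre where "Pre a = (\<Union>b\<in>underS rr a. W b)"
definition p where "p a = pt (Pre a)"

lemma W_eq: "W a = T (Pre a \<union> {p a})"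
proof -
  have "wo_rel.adm_wo rr F"
    unfolding wo_rel.adm_wo_def[OF rr_wo]
  proof (intro allI impI)
    fix f g :: "real \<Rightarrow> 'a set" and x assume "\<forall>y\<in>underS rr x. f y = g y"
    hence "(\<Union>b\<in>underS rr x. f b) = (\<Union>b\<in>underS rr x. g b)" by auto
    thus "F f x = F g x" unfolding F_def by simp
  qed
  hence "W = F W" unfolding W_def by (rule wo_rel.worec_fixpoint[OF rr_wo])
  hence "W a = F W a" by simp
  thus ?thesis unfolding F_def Pre_def p_def .
qed

lemma W_top: "W a \<subseteq> topspace X"
  unfolding W_eq T_def by (rule closure_of_subset_topspace)

lemma Pre_top: "Pre a \<subseteq> topspace X"
  unfolding Pre_def using W_top by blast

lemma p_ok: assumes "|Pre a| \<le>o rr" shows "p a \<in> topspace X" "p a \<notin> Pre a"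
proof -
  have "\<exists>q. q \<in> topspace X \<and> q \<notin> Pre a"
  proof (rule ccontr)
    assume "\<not> ?thesis"
    hence "topspace X \<subseteq> Pre a" by blast
    hence "|topspace X| \<le>o rr" using assms card_of_mono1 ordLeq_transitive by blast
    thus False using big not_ordLess_ordLeq by blast
  qed
  hence "p a \<in> topspace X \<and> p a \<notin> Pre a" unfolding p_def pt_def by (rule someI_ex)
  thus "p a \<in> topspace X" "p a \<notin> Pre a" by auto
qed

lemma Pre_card_aux: assumes "\<And>b. b \<in> underS rr a \<Longrightarrow> |W b| \<le>o rr" shows "|Pre a| \<le>o rr"
proof -
  have "|underS rr a| \<le>o rr"
    using card_of_underS[OF rr_co] rr_F ordLess_imp_ordLeq by blast
  thus ?thesis unfolding Pre_def
    using card_of_UNION_ordLeq_infinite_Field[OF rr_inf rr_co] assms by blast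
qed

lemma W_card: "|W a| \<le>o rr"
proof (induction a rule: wf_induct[OF wo_rel.WF[OF rr_wo]])
  case (1 a)
  hence "|Pre a| \<le>o rr" using Pre_card_aux underS_iff by blast
  hence "|Pre a \<union> {p a}| \<le>o rr"
    by (rule card_of_Un_ordLeq_infinite_Field[OF rr_inf _ singl_le rr_co])
  moreover have "Pre a \<union> {p a} \<subseteq> topspace X" using Pre_top p_ok \<open>|Pre a| \<le>o rr\<close> by blast
  ultimately show ?case unfolding W_eq by (rule T_card[rotated])
qed

lemma Pre_card: "|Pre a| \<le>o rr" using Pre_card_aux W_card by blast

lemma p_top: "p a \<in> topspace X" and p_notin: "p a \<notin> Pre a"
  using p_ok Pre_card by blast+

lemma W_sup: "Pre a \<subseteq> W a" "p a \<in> W a" "y \<in> Pre a \<Longrightarrow> Nb y \<subseteq> W a"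
  "X closure_of (Pre a) \<subseteq> W a"
proof -
  let ?Y = "Pre a \<union> {p a}"
  let ?Z = "?Y \<union> (\<Union>y\<in>?Y. Nb y)"
  have Zs: "?Z \<subseteq> topspace X" using Pre_top p_top Nb(1) by blast
  have ZW: "?Z \<subseteq> W a" unfolding W_eq T_def by (rule closure_of_subset[OF Zs])
  thus "Pre a \<subseteq> W a" "p a \<in> W a" "y \<in> Pre a \<Longrightarrow> Nb y \<subseteq> W a" by blast+
  show "X closure_of (Pre a) \<subseteq> W a" unfolding W_eq T_def by (rule closure_of_mono) blast
qed

lemma W_mono: "b \<in> underS rr a \<Longrightarrow> W b \<subseteq> W a"
  using W_sup(1) unfolding Pre_def by blast

lemma W_mono': "(b,a) \<in> rr \<Longrightarrow> W b \<subseteq> W a"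
  using W_mono underS_iff by (cases "b = a") auto

definition V where "V J = (\<Union>b\<in>J. W b)"
definition good where "good J (K::real set) \<longleftrightarrow> (\<forall>B. B \<subseteq> J \<and> |B| \<le>o |K| \<longrightarrow> (\<exists>j\<in>J. B \<subseteq> underS rr j))"
definition nomax where "nomax J \<longleftrightarrow> (\<forall>b\<in>J. \<exists>j\<in>J. b \<in> underS rr j)"

lemma V_top: "V J \<subseteq> topspace X" unfolding V_def using W_top by blast

lemma open_V: assumes "nomax J" shows "openin X (V J)"
  unfolding openin_subopen[of X "V J"]
proof
  fix x assume "x \<in> V J"
  then obtain b where b: "b \<in> J" "x \<in> W b" unfolding V_def by blast
  then obtain j where j: "j \<in> J" "b \<in> underS rr j" using assms unfolding nomax_def by blast
  have x: "x \<in> topspace X" using b W_top by blast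
  have "x \<in> Pre j" using b j unfolding Pre_def by blast
  hence "Nb x \<subseteq> W j" by (rule W_sup(3))
  moreover have "W j \<subseteq> V J" using j(1) unfolding V_def by blast
  ultimately have "X interior_of Nb x \<subseteq> V J" using interior_of_subset[of X "Nb x"] by blast
  thus "\<exists>T. openin X T \<and> x \<in> T \<and> T \<subseteq> V J" using Nb(3)[OF x]
    by (intro exI[of _ "X interior_of Nb x"]) simp
qed

lemma closed_V: assumes "\<forall>x\<in>topspace X. \<exists>K::real set. tightness_le X x K \<and> good J K"
  shows "closedin X (V J)"
proof -
  have "X closure_of (V J) \<subseteq> V J"
  proof
    fix x assume xc: "x \<in> X closure_of (V J)"
    hence x: "x \<in> topspace X" using closure_of_subset_topspace[of X "V J"] by blast
    then obtain K where K: "tightness_le X x K" "good J K" using assms by blast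
    then obtain B0 where B0: "B0 \<subseteq> V J" "|B0| \<le>o |K|" "x \<in> X closure_of B0"
      using xc V_top unfolding tightness_le_def by blast
    define idx where "idx y = (SOME b. b \<in> J \<and> y \<in> W b)" for y
    have idx: "idx y \<in> J \<and> y \<in> W (idx y)" if "y \<in> B0" for y
    proof -
      have "\<exists>b. b \<in> J \<and> y \<in> W b" using that B0(1) unfolding V_def by blast
      thus ?thesis unfolding idx_def by (rule someI_ex)
    qed
    have "|idx ` B0| \<le>o |K|" using card_of_image B0(2) ordLeq_transitive by blast
    moreover have "idx ` B0 \<subseteq> J" using idx by blast
    ultimately obtain j where j: "j \<in> J" "idx ` B0 \<subseteq> underS rr j" using K(2) unfolding good_def by blast
    have "B0 \<subseteq> Pre j" unfolding Pre_def using idx j by blast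
    hence "x \<in> X closure_of (Pre j)" using B0(3) closure_of_mono by blast
    thus "x \<in> V J" using W_sup(4) j(1) unfolding V_def by blast
  qed
  thus ?thesis using closure_of_subset_eq V_top by blast
qed

lemma good_UNIV: assumes "below_cf_continuum K" shows "good UNIV K"
  unfolding good_def
proof (intro allI impI)
  fix B :: "real set" assume B: "B \<subseteq> UNIV \<and> |B| \<le>o |K|"
  have "\<not> cofinal B rr"
    using assms B not_ordLess_ordLeq unfolding below_cf_continuum_def by blast
  then obtain a where a: "\<forall>b\<in>B. \<not> (a \<noteq> b \<and> (a,b) \<in> rr)" unfolding cofinal_def by blast
  obtain j where j: "a \<noteq> j" "(a,j) \<in> rr" using nomax_rr by blast
  have "B \<subseteq> underS rr j"
  proof
    fix b assume "b \<in> B"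
    hence "(b,a) \<in> rr" using a tot[of a b] tot[of a a] by (cases "a = b") auto
    hence "(b,j) \<in> rr" using j trn by blast
    moreover have "b \<noteq> j" using a j \<open>b \<in> B\<close> by blast
    ultimately show "b \<in> underS rr j" using underS_iff by blast
  qed
  thus "\<exists>j\<in>UNIV. B \<subseteq> underS rr j" by blast
qed

lemma nomax_UNIV: "nomax UNIV" unfolding nomax_def
proof
  fix b :: real
  obtain j where "b \<noteq> j" "(b,j) \<in> rr" using nomax_rr by blast
  thus "\<exists>j\<in>UNIV. b \<in> underS rr j" using underS_iff by blast
qed

abbreviation "U \<equiv> V UNIV"

lemma U_open: "openin X U" by (rule open_V[OF nomax_UNIV])

lemma U_closed: "closedin X U"
  using tight good_UNIV closed_V unfolding tightness_below_cf_continuum_def by meson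


lemma U_card: "|U| =o rr"
proof -
  have "|U| \<le>o rr" unfolding V_def
    using card_of_UNION_ordLeq_infinite_Field[OF rr_inf rr_co] W_card
      card_of_mono1[of "UNIV::real set" "UNIV::real set"] unfolding continuum_def by blast
  moreover have "rr \<le>o |U|"
  proof -
    have "inj_on p (UNIV::real set)"
    proof (rule inj_onI)
      fix a b assume "p a = p b"
      show "a = b"
      proof (rule ccontr)
        assume ne: "a \<noteq> b"
        have "p a \<in> W a" "p b \<in> W b" using W_sup(2) by blast+
        from tot[of a b] show False
        proof
          assume "(a,b) \<in> rr"
          hence "a \<in> underS rr b" using ne underS_iff by blast
          hence "p a \<in> Pre b" using \<open>p a \<in> W a\<close> unfolding Pre_def by blast
          thus False using p_notin \<open>p a = p b\<close> by metis
        next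
          assume "(b,a) \<in> rr"
          hence "b \<in> underS rr a" using ne underS_iff by blast
          hence "p b \<in> Pre a" using \<open>p b \<in> W b\<close> unfolding Pre_def by blast
          thus False using p_notin \<open>p a = p b\<close> by metis
        qed
      qed
    qed
    moreover have "p ` UNIV \<subseteq> U" unfolding V_def using W_sup(2) by blast
    ultimately show ?thesis unfolding continuum_def card_of_ordLeq[symmetric] by blast
  qed
  ultimately show ?thesis using ordIso_iff_ordLeq by blast
qed

lemma U_lind_le: "lindelof_le X U (UNIV :: real set)"
  unfolding lindelof_le_def
proof (intro allI impI)
  fix \<U> :: "'a set set" assume H: "(\<forall>V\<in>\<U>. openin X V) \<and> U \<subseteq> \<Union>\<U>"
  define g where "g u = (SOME V. V \<in> \<U> \<and> u \<in> V)" for u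
  have g: "g u \<in> \<U> \<and> u \<in> g u" if "u \<in> U" for u
  proof -
    have "\<exists>V. V \<in> \<U> \<and> u \<in> V" using H that by blast
    thus ?thesis unfolding g_def by (rule someI_ex)
  qed
  have "|g ` U| \<le>o |UNIV :: real set|"
    using card_of_image[of g U] U_card ordIso_imp_ordLeq ordLeq_transitive
    unfolding continuum_def by blast
  moreover have "g ` U \<subseteq> \<U>" "U \<subseteq> \<Union>(g ` U)" using g by blast+
  ultimately show "\<exists>\<V>\<subseteq>\<U>. U \<subseteq> \<Union>\<V> \<and> |\<V>| \<le>o |UNIV :: real set|" by blast
qed

definition Ob where "Ob b = (\<Union>y\<in>W b. X interior_of Nb y)"

lemma O_open: "openin X (Ob b)" unfolding Ob_def by (intro openin_Union) auto

lemma O_sup: "W b \<subseteq> Ob b" unfolding Ob_def using Nb(3) W_top by blast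

lemma O_sub: assumes "b \<in> underS rr j" shows "Ob b \<subseteq> W j"
proof -
  have "W b \<subseteq> Pre j" using assms unfolding Pre_def by blast
  have "X interior_of Nb y \<subseteq> W j" if "y \<in> W b" for y
    using W_sup(3)[of y j] interior_of_subset[of X "Nb y"] that \<open>W b \<subseteq> Pre j\<close> by blast
  thus ?thesis unfolding Ob_def by blast
qed

lemma not_lind: assumes g: "good J K" and nm: "nomax J" and cl: "closedin X (V J)"
  shows "\<not> lindelof_le X U K"
proof
  assume L: "lindelof_le X U K"
  let ?C = "Ob ` J \<union> {U - V J}"
  have "\<forall>V\<in>?C. openin X V" using O_open openin_diff[OF U_open cl] by blast
  moreover have "U \<subseteq> \<Union>?C"
  proof
    fix u assume u: "u \<in> U"
    show "u \<in> \<Union>?C"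
    proof (cases "u \<in> V J")
      case True
      then obtain b where b: "b \<in> J" "u \<in> W b" unfolding V_def by blast
      hence "u \<in> Ob b" using O_sup by blast
      thus ?thesis using b(1) by blast
    next
      case False
      thus ?thesis using u by blast
    qed
  qed
  ultimately obtain \<V> where Vs: "\<V> \<subseteq> ?C" "U \<subseteq> \<Union>\<V>" "|\<V>| \<le>o |K|"
    using L unfolding lindelof_le_def by meson
  define idx where "idx V = (SOME b. b \<in> J \<and> V = Ob b)" for V
  have idx: "idx V \<in> J \<and> V = Ob (idx V)" if "V \<in> Ob ` J" for V
  proof -
    have "\<exists>b. b \<in> J \<and> V = Ob b" using that by blast
    thus ?thesis unfolding idx_def by (rule someI_ex)
  qed
  let ?B = "idx ` (\<V> \<inter> Ob ` J)"
  have c1: "|?B| \<le>o |\<V> \<inter> Ob ` J|" by (rule card_of_image)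
  have c2: "|\<V> \<inter> Ob ` J| \<le>o |\<V>|" by (rule card_of_mono1) blast
  have "|?B| \<le>o |K|" using ordLeq_transitive[OF ordLeq_transitive[OF c1 c2] Vs(3)] .
  moreover have "?B \<subseteq> J" using idx by blast
  ultimately obtain j where j: "j \<in> J" "?B \<subseteq> underS rr j" using g unfolding good_def by blast
  obtain j' where j': "j' \<in> J" "j \<in> underS rr j'" using nm j(1) unfolding nomax_def by blast
  have q: "p j' \<in> V J" using W_sup(2) j'(1) unfolding V_def by blast
  hence "p j' \<in> U" unfolding V_def by blast
  then obtain V where V: "V \<in> \<V>" "p j' \<in> V" using Vs(2) by blast
  have "V \<in> Ob ` J" using V Vs(1) q by blast
  hence "idx V \<in> underS rr j" "V = Ob (idx V)" using idx j(2) V(1) by blast+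
  hence "V \<subseteq> W j" using O_sub by blast
  moreover have "W j \<subseteq> Pre j'" using j'(2) unfolding Pre_def by blast
  ultimately show False using V(2) p_notin by blast
qed

lemma U_lind_not: assumes K: "infinite (K::real set)" "|K| <o rr" shows "\<not> lindelof_le X U K"
proof (cases "below_cf_continuum K")
  case True
  thus ?thesis using not_lind[OF good_UNIV[OF True] nomax_UNIV U_closed] by blast
next
  case False
  then obtain A where A: "cofinal A rr" "\<not> |K| <o |A|" unfolding below_cf_continuum_def by blast
  hence AK: "|A| \<le>o |K|" using ordLess_or_ordLeq card_of_Well_order by blast
  have Kne: "K \<noteq> {}" using K(1) by auto
  let ?S = "{a. |K| <o |underS rr a|}"
  have "?S \<noteq> {}"
  proof
    assume S0: "?S = {}"
    have "\<forall>b\<in>A. |underS rr b| \<le>o |K|"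
      using S0 ordLess_or_ordLeq card_of_Well_order by blast
    hence "|\<Union>b\<in>A. underS rr b| \<le>o |K|"
      using card_of_UNION_ordLeq_infinite[OF K(1) AK] by blast
    moreover have "(UNIV::real set) \<subseteq> (\<Union>b\<in>A. underS rr b)"
      using A(1) rr_F underS_iff unfolding cofinal_def by blast
    ultimately have "|UNIV::real set| \<le>o |K|" using card_of_mono1 ordLeq_transitive by blast
    thus False using K(2) not_ordLess_ordLeq unfolding continuum_def by blast
  qed
  then obtain a where a: "a \<in> ?S" "\<And>y. (y,a) \<in> rr - Id \<Longrightarrow> y \<notin> ?S"
    using wfE_min'[OF wo_rel.WF[OF rr_wo]] by metis
  let ?J = "underS rr a"
  have small: "|underS rr b \<union> {b}| \<le>o |K|" if "b \<in> ?J" for b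
  proof -
    have "(b,a) \<in> rr - Id" using that underS_iff by blast
    hence "|underS rr b| \<le>o |K|" using a(2) ordLess_or_ordLeq card_of_Well_order by blast
    moreover have "|{b}| \<le>o |K|" using card_of_singl_ordLeq[OF Kne] .
    ultimately show ?thesis
      using card_of_Un_ordLeq_infinite_Field[of "|K|"] card_of_Card_order Field_card_of K(1) by metis
  qed
  have gJ: "good ?J K" unfolding good_def
  proof (intro allI impI)
    fix B assume B: "B \<subseteq> ?J \<and> |B| \<le>o |K|"
    show "\<exists>j\<in>?J. B \<subseteq> underS rr j"
    proof (rule ccontr)
      assume nb: "\<not> ?thesis"
      have "?J \<subseteq> (\<Union>b\<in>B. underS rr b \<union> {b})"
      proof
        fix i assume i: "i \<in> ?J"
        then obtain b where b: "b \<in> B" "b \<notin> underS rr i" using nb by blast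
        hence "i = b \<or> (i,b) \<in> rr" using tot underS_iff by blast
        hence "i \<in> underS rr b \<union> {b}" using underS_iff by blast
        thus "i \<in> (\<Union>b\<in>B. underS rr b \<union> {b})" using b(1) by blast
      qed
      hence c1: "|?J| \<le>o |\<Union>b\<in>B. underS rr b \<union> {b}|" by (rule card_of_mono1)
      have "\<forall>b\<in>B. |underS rr b \<union> {b}| \<le>o |K|" using B small by blast
      hence c2: "|\<Union>b\<in>B. underS rr b \<union> {b}| \<le>o |K|"
        by (rule card_of_UNION_ordLeq_infinite[OF K(1) conjunct2[OF B], of "\<lambda>b. underS rr b \<union> {b}"])
      have "|?J| \<le>o |K|" using ordLeq_transitive[OF c1 c2] .
      thus False using a(1) not_ordLess_ordLeq by blast
    qed
  qed
  have nmJ: "nomax ?J" unfolding nomax_def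
  proof
    fix b assume "b \<in> ?J"
    moreover have "|{b}| \<le>o |K|" using card_of_singl_ordLeq[OF Kne] .
    ultimately obtain j where "j \<in> ?J" "{b} \<subseteq> underS rr j" using gJ unfolding good_def by blast
    thus "\<exists>j\<in>?J. b \<in> underS rr j" by blast
  qed
  have clJ: "closedin X (V ?J)"
  proof (rule closed_V, intro ballI)
    fix x assume "x \<in> topspace X"
    then obtain Kx :: "real set" where Kx: "below_cf_continuum Kx" "tightness_le X x Kx"
      using tight unfolding tightness_below_cf_continuum_def by blast
    have "|Kx| <o |A|" using Kx(1) A(1) unfolding below_cf_continuum_def by blast
    hence "|Kx| \<le>o |K|" using AK ordLess_ordLeq_trans ordLess_imp_ordLeq by blast
    hence "good ?J Kx" using gJ ordLeq_transitive unfolding good_def by blast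
    thus "\<exists>K::real set. tightness_le X x K \<and> good ?J K" using Kx(2) by blast
  qed
  show ?thesis by (rule not_lind[OF gJ nmJ clJ])
qed

lemma main: "\<exists>U. closedin X U \<and> openin X U \<and> (card_of U, continuum) \<in> ordIso
             \<and> lindelof_eq_continuum X U"
  using U_closed U_open U_card U_lind_le U_lind_not unfolding lindelof_eq_continuum_def by blast

end

theorem theorem4p2:
  fixes X :: "'a topology"
  assumes "locally_continuum X"
    and "continuum_fair X"
    and "\<forall>x\<in>topspace X. tightness_below_cf_continuum X x"
    and "(continuum, card_of (topspace X)) \<in> ordLess"
  shows "\<exists>U. closedin X U \<and> openin X U \<and> (card_of U, continuum) \<in> ordIso
             \<and> lindelof_eq_continuum X U"
proof -
  interpret T42 X using assms by unfold_locales
  show ?thesis by (rule main)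
qed

end
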